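(* Let $\alpha\neq\beta$ be complex numbers and let $(g_n)_{n\ge0}$ be the polynomials defined in the context. Then $$g_n(\alpha)=\frac{1}{n}\sum_{k=0}^{n-1}\binom{n}{k}\binom{n}{k+1}\beta^{n-k}\alpha^{k}\qquad (n\ge1),\qquad g_0(\alpha)=1 .$$
   Context: Fix complex numbers $\alpha\neq\beta$. Define polynomials $g_n(x)\in\mathbb{C}[x]$ recursively by $g_0(x)=1$ and, for $n\ge1$, $$(x-\alpha)(\alpha-\beta)^{n-1}g_n(x)=\alpha(x-\beta)^n g_{n-1}(\alpha)-x(\alpha-\beta)^n g_{n-1}(x).$$ (The right-hand side vanishes at $x=\alpha$, so it is divisible by $x-\alpha$ and $g_n$ is a uniquely determined polynomial.) Here $g_n(\alpha)$ denotes the value of the polynomial $g_n$ at $x=\alpha$. *)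

theory Defs
  imports "HOL-Computational_Algebra.Polynomial"
begin

text \<open>The recursion (x - a) (a - b)^(n-1) g_n(x) = a (x - b)^n g_{n-1}(a) - x (a - b)^n g_{n-1}(x)
  is solved for g_n by exact polynomial division by (x - a) (the right-hand side vanishes
  at x = a) followed by division by the scalar (a - b)^(n-1).\<close>

fun gpoly :: "complex \<Rightarrow> complex \<Rightarrow> nat \<Rightarrow> complex poly" where
  "gpoly a b 0 = 1"
| "gpoly a b (Suc n) =
     smult (inverse ((a - b) ^ n))
       ((smult (a * poly (gpoly a b n) a) ([:- b, 1:] ^ Suc n)
         - smult ((a - b) ^ Suc n) ([:0, 1:] * gpoly a b n)) div [:- a, 1:])"

end

theory Submission
  imports Defs
begin

definition A :: "nat \<Rightarrow> nat \<Rightarrow> nat \<Rightarrow> int" where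
"A n j k = (if j = 0 then (if k = 0 then 1 else 0) else if k = 0 then 0 else
   int ((n-1) choose k) * int ((j-1) choose (k-1)) - int ((n-1) choose (k-1)) * int ((j-1) choose k))"

lemma hs: "(\<Sum>i<m. int (i choose r)) = int (m choose Suc r)"
  by (induction m) auto

lemma A_sum_lt: "(\<Sum>i<j. A n i k) = (if j = 0 then 0 else if k = 0 then 1 else
   int ((n-1) choose k) * int ((j-1) choose k) - int ((n-1) choose (k-1)) * int ((j-1) choose Suc k))"
proof (cases j)
  case 0 then show ?thesis by simp
next
  case (Suc j')
  have "(\<Sum>i<Suc j'. A n i k) = A n 0 k + (\<Sum>i<j'. A n (Suc i) k)"
    by (subst sum.lessThan_Suc_shift) simp
  also have "(\<Sum>i<j'. A n (Suc i) k) = (if k = 0 then 0 else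
      int ((n-1) choose k) * (\<Sum>i<j'. int (i choose (k-1))) - int ((n-1) choose (k-1)) * (\<Sum>i<j'. int (i choose k)))"
    by (simp add: A_def sum_distrib_left sum_subtractf)
  finally show ?thesis using Suc by (cases k) (simp_all add: hs A_def)
qed

lemma L1: assumes "j \<le> n"
  shows "A (Suc n) j k = A n j k + (if k = 0 then 0 else (\<Sum>i<j. A n i (k-1)))"
proof (cases j)
  case 0 then show ?thesis by (simp add: A_def)
next
  case (Suc j')
  then obtain n' where n: "n = Suc n'" using assms by (cases n) auto
  show ?thesis
  proof (cases k)
    case 0 then show ?thesis using Suc by (simp add: A_def)
  next
    case (Suc k')
    show ?thesis
    proof (cases k')
      case 0
      have "(\<Sum>i<j. A n i (k-1)) = 1" using \<open>j = Suc j'\<close> \<open>k = Suc k'\<close> 0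
        by (simp only: A_sum_lt) simp
      then show ?thesis using \<open>j = Suc j'\<close> \<open>k = Suc k'\<close> n 0
        by (simp add: A_def)
    next
      case (Suc k'')
      have "(\<Sum>i<j. A n i (k-1)) = int (n' choose k') * int (j' choose k') - int (n' choose k'') * int (j' choose k)"
        using \<open>j = Suc j'\<close> \<open>k = Suc k'\<close> n Suc
        by (simp only: A_sum_lt) simp
      then show ?thesis using \<open>j = Suc j'\<close> \<open>k = Suc k'\<close> n Suc
        by (simp add: A_def algebra_simps)
    qed
  qed
qed

lemma L2: "A (Suc n) (Suc n) k = 0"
  by (simp add: A_def)

lemma L3: "j \<le> n \<Longrightarrow> A n j (Suc n) = 0"
  by (cases n) (auto simp: A_def binomial_eq_0)

lemma Nar: assumes "n \<ge> 1"
  shows "int n * (\<Sum>j\<le>n. A n j k) = int (n choose k) * int (n choose Suc k)"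
proof -
  obtain m where m: "n = Suc m" using assms by (cases n) auto
  have s: "(\<Sum>j\<le>Suc m. A (Suc m) j k) = A (Suc m) 0 k + (\<Sum>j\<le>m. A (Suc m) (Suc j) k)"
    by (subst sum.atMost_Suc_shift) simp
  show ?thesis
  proof (cases k)
    case 0
    have "(\<Sum>j\<le>m. A (Suc m) (Suc j) k) = 0" using 0 by (simp add: A_def)
    then show ?thesis using s 0 m by (simp add: A_def)
  next
    case (Suc k')
    have "(\<Sum>j\<le>m. A (Suc m) (Suc j) k) = int (m choose k) * (\<Sum>j\<le>m. int (j choose k')) - int (m choose k') * (\<Sum>j\<le>m. int (j choose k))"
      using Suc by (simp add: A_def sum_distrib_left sum_subtractf)
    also have "\<dots> = int (m choose k) * int (Suc m choose k) - int (m choose k') * int (Suc m choose Suc k)"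
      using Suc by (simp flip: of_nat_sum add: sum_choose_upper)
    finally have e0: "(\<Sum>j\<le>m. A (Suc m) (Suc j) k) = int (m choose k) * int (Suc m choose k) - int (m choose k') * int (Suc m choose Suc k)" .
    have a0: "A (Suc m) 0 k = 0" using Suc by (simp add: A_def)
    have e: "(\<Sum>j\<le>n. A n j k) = int (m choose k) * int (Suc m choose k) - int (m choose k') * int (Suc m choose Suc k)"
      unfolding m s a0 e0 by simp
    have f1: "int (Suc m) * int (m choose k') = int (Suc m choose k) * int k"
      using Suc_times_binomial_eq[of m k'] Suc by (metis of_nat_mult)
    have f2: "int (Suc m) * int (m choose k) = int (Suc m choose Suc k) * int (Suc k)"
      using Suc_times_binomial_eq[of m k] by (metis of_nat_mult)
    have "int n * (\<Sum>j\<le>n. A n j k) = (int (Suc m) * int (m choose k)) * int (Suc m choose k) - (int (Suc m) * int (m choose k')) * int (Suc m choose Suc k)"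
      unfolding e unfolding m by (simp add: algebra_simps)
    also have "\<dots> = int (Suc m choose Suc k) * int (Suc k) * int (Suc m choose k) - int (Suc m choose k) * int k * int (Suc m choose Suc k)"
      using f1 f2 by simp
    also have "\<dots> = int (n choose k) * int (n choose Suc k)" using m by (simp add: algebra_simps)
    finally show ?thesis .
  qed
qed

definition p :: "complex \<Rightarrow> complex \<Rightarrow> nat \<Rightarrow> nat \<Rightarrow> complex" where
"p a b n j = (\<Sum>k\<le>n. of_int (A n j k) * a ^ k * b ^ (n - k))"

lemma Lp: assumes "j \<le> n"
  shows "p a b (Suc n) j = b * p a b n j + a * (\<Sum>i<j. p a b n i)"
proof -
  have "p a b (Suc n) j = (\<Sum>k\<le>Suc n. of_int (A n j k) * a ^ k * b ^ (Suc n - k))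
     + (\<Sum>k\<le>Suc n. of_int (if k = 0 then 0 else (\<Sum>i<j. A n i (k-1))) * a ^ k * b ^ (Suc n - k))"
    unfolding p_def L1[OF assms] by (simp add: algebra_simps sum.distrib)
  also have "(\<Sum>k\<le>Suc n. of_int (A n j k) * a ^ k * b ^ (Suc n - k)) = b * p a b n j"
    using L3[OF assms] by (simp add: p_def sum_distrib_left Suc_diff_le algebra_simps)
  also have "(\<Sum>k\<le>Suc n. of_int (if k = 0 then 0 else (\<Sum>i<j. A n i (k-1))) * a ^ k * b ^ (Suc n - k))
      = (\<Sum>k\<le>n. of_int (\<Sum>i<j. A n i k) * a ^ Suc k * b ^ (n - k))"
    by (subst sum.atMost_Suc_shift) simp
  also have "\<dots> = a * (\<Sum>i<j. p a b n i)"
    unfolding p_def by (simp add: sum_distrib_left sum_distrib_right of_int_sum algebra_simps sum.swap[of _ "{..<j}"])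
  finally show ?thesis .
qed

lemma K: "((t::complex) - 1) * (\<Sum>j\<le>n. (b * f j + a * (\<Sum>i<j. f i)) * t ^ j)
   = a * t ^ Suc n * (\<Sum>j\<le>n. f j) - ((a - b) * t + b) * (\<Sum>j\<le>n. f j * t ^ j)"
proof (induction n)
  case 0 then show ?case by (simp add: algebra_simps)
next
  case (Suc n)
  have "(t - 1) * (\<Sum>j\<le>Suc n. (b * f j + a * (\<Sum>i<j. f i)) * t ^ j)
    = (t - 1) * (\<Sum>j\<le>n. (b * f j + a * (\<Sum>i<j. f i)) * t ^ j) + (t - 1) * ((b * f (Suc n) + a * (\<Sum>i\<le>n. f i)) * t ^ Suc n)"
    by (simp add: algebra_simps lessThan_Suc_atMost)
  also have "\<dots> = a * t ^ Suc (Suc n) * (\<Sum>j\<le>Suc n. f j) - ((a - b) * t + b) * (\<Sum>j\<le>Suc n. f j * t ^ j)"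
    unfolding Suc.IH by (simp add: algebra_simps)
  finally show ?case .
qed

definition P :: "complex \<Rightarrow> complex \<Rightarrow> nat \<Rightarrow> complex poly" where
"P a b n = (\<Sum>j\<le>n. monom (p a b n j) j)"

lemma polyP: "poly (P a b n) t = (\<Sum>j\<le>n. p a b n j * t ^ j)"
  by (simp add: P_def poly_sum poly_monom)

lemma Kp: "(t - 1) * poly (P a b (Suc n)) t = a * t ^ Suc n * poly (P a b n) 1 - ((a - b) * t + b) * poly (P a b n) t"
proof -
  have z: "p a b (Suc n) (Suc n) = 0" by (simp add: p_def L2)
  have "poly (P a b (Suc n)) t = (\<Sum>j\<le>n. (b * p a b n j + a * (\<Sum>i<j. p a b n i)) * t ^ j)"
    unfolding polyP using z Lp by simp
  then show ?thesis using K[of t b "p a b n" a n] by (simp add: polyP)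
qed

lemma ab1: "(a::complex) \<noteq> b \<Longrightarrow> a / (a - b) - b / (a - b) = 1"
  by (metis diff_divide_distrib divide_self_if right_minus_eq)

lemma gpoly_eq:
  assumes ab: "a \<noteq> b"
  shows "gpoly a b n = pcompose (P a b n) [:- b / (a - b), 1 / (a - b):]"
proof (induction n)
  case 0
  have "P a b 0 = 1" by (simp add: P_def p_def A_def)
  then show ?case by (simp add: pcompose_1)
next
  case (Suc n)
  define d where "d = a - b"
  have d0: "d \<noteq> 0" using ab by (simp add: d_def)
  define T where "T = [:- b / (a - b), 1 / (a - b):]"
  have pT: "poly T x = (x - b) / d" for x by (simp add: T_def d_def diff_divide_distrib)
  define c where "c = poly (gpoly a b n) a"
  have c: "c = poly (P a b n) 1" using Suc d0 ab unfolding c_def by (simp add: poly_pcompose pT[unfolded T_def] d_def ab1)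
  define N where "N = smult (a * c) ([:- b, 1:] ^ Suc n) - smult ((a - b) ^ Suc n) ([:0, 1:] * gpoly a b n)"
  have N: "N = [:- a, 1:] * smult (d ^ n) (pcompose (P a b (Suc n)) T)"
  proof (rule poly_eq_poly_eq_iff[THEN iffD1], rule ext)
    fix x
    define t where "t = (x - b) / d"
    have xb: "x - b = d * t" using d0 by (simp add: t_def)
    have xa: "x - a = d * (t - 1)" using d0 by (simp add: t_def d_def field_simps)
    have x: "x = d * t + b" using xb by (simp add: algebra_simps)
    have g: "poly (gpoly a b n) x = poly (P a b n) t"
      unfolding Suc poly_pcompose T_def[symmetric] pT t_def ..
    have "poly N x = a * c * (x - b) ^ Suc n - d ^ Suc n * x * poly (gpoly a b n) x"
      unfolding N_def by (simp add: d_def algebra_simps)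
    also have "\<dots> = a * c * (d * t) ^ Suc n - d ^ Suc n * x * poly (P a b n) t"
      unfolding g xb ..
    finally have "poly N x = a * c * (d * t) ^ Suc n - d ^ Suc n * x * poly (P a b n) t" .
    also have "\<dots> = d ^ Suc n * (a * t ^ Suc n * poly (P a b n) 1 - (d * t + b) * poly (P a b n) t)"
      unfolding c x[symmetric] by (simp only: power_mult_distrib algebra_simps)
    also have "\<dots> = d ^ Suc n * ((t - 1) * poly (P a b (Suc n)) t)" using Kp[of t a b n] by (simp add: d_def)
    also have "\<dots> = poly ([:- a, 1:] * smult (d ^ n) (pcompose (P a b (Suc n)) T)) x"
    proof -
      have l: "poly [:- a, 1:] x = d * (t - 1)" using xa by simp
      show ?thesis unfolding poly_mult poly_smult poly_pcompose pT t_def[symmetric] l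
        by (simp add: algebra_simps)
    qed
    finally show "poly N x = poly ([:- a, 1:] * smult (d ^ n) (pcompose (P a b (Suc n)) T)) x" .
  qed
  have "gpoly a b (Suc n) = smult (inverse (d ^ n)) (N div [:- a, 1:])"
    by (simp add: N_def c_def d_def)
  also have "\<dots> = pcompose (P a b (Suc n)) T"
  proof -
    have "N div [:- a, 1:] = smult (d ^ n) (pcompose (P a b (Suc n)) T)"
      unfolding N by (rule nonzero_mult_div_cancel_left) simp
    then show ?thesis using d0 by simp
  qed
  finally show ?case by (simp add: T_def)
qed

theorem mainTheorem1:
  fixes a b :: complex
  assumes "a \<noteq> b"
  shows "poly (gpoly a b 0) a = 1 \<and>
    (\<forall>n::nat. n \<ge> 1 \<longrightarrow>
       poly (gpoly a b n) a =
         (1 / of_nat n) * (\<Sum>k<n. of_nat (n choose k) * of_nat (n choose (k + 1)) * b ^ (n - k) * a ^ k))"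
proof (intro conjI allI impI)
  show "poly (gpoly a b 0) a = 1" by simp
next
  fix n :: nat assume n: "n \<ge> 1"
  have pT: "poly [:- b / (a - b), 1 / (a - b):] a = 1" 
  proof -
    have "poly [:- b / (a - b), 1 / (a - b):] a = a / (a - b) - b / (a - b)" by simp
    then show ?thesis using ab1[OF assms] by simp
  qed
  have "poly (gpoly a b n) a = (\<Sum>j\<le>n. p a b n j)"
    unfolding gpoly_eq[OF assms] poly_pcompose pT polyP by simp
  also have "\<dots> = (\<Sum>k\<le>n. of_int (\<Sum>j\<le>n. A n j k) * a ^ k * b ^ (n - k))"
  proof -
    have "(\<Sum>j\<le>n. p a b n j) = (\<Sum>j\<le>n. \<Sum>k\<le>n. of_int (A n j k) * a ^ k * b ^ (n - k))"
      unfolding p_def ..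
    also have "\<dots> = (\<Sum>k\<le>n. \<Sum>j\<le>n. of_int (A n j k) * a ^ k * b ^ (n - k))"
      by (rule sum.swap)
    also have "\<dots> = (\<Sum>k\<le>n. of_int (\<Sum>j\<le>n. A n j k) * a ^ k * b ^ (n - k))"
      by (simp only: of_int_sum sum_distrib_right)
    finally show ?thesis .
  qed
  also have "\<dots> = (\<Sum>k\<le>n. (1 / of_nat n) * (of_nat (n choose k) * of_nat (n choose (k + 1))) * a ^ k * b ^ (n - k))"
  proof (rule sum.cong[OF refl])
    fix k
    have "of_int (int n * (\<Sum>j\<le>n. A n j k)) = (of_int (int (n choose k) * int (n choose Suc k)) :: complex)"
      using Nar[OF n] by simp
    then have "of_nat n * of_int (\<Sum>j\<le>n. A n j k) = (of_nat (n choose k) * of_nat (n choose (k + 1)) :: complex)"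
      by simp
    then have "of_int (\<Sum>j\<le>n. A n j k) = (1 / of_nat n) * (of_nat (n choose k) * of_nat (n choose (k + 1)) :: complex)"
      using n by (simp add: field_simps)
    then show "of_int (\<Sum>j\<le>n. A n j k) * a ^ k * b ^ (n - k) = (1 / of_nat n) * (of_nat (n choose k) * of_nat (n choose (k + 1))) * a ^ k * b ^ (n - k)"
      by simp
  qed
  also have "\<dots> = (\<Sum>k<n. (1 / of_nat n) * (of_nat (n choose k) * of_nat (n choose (k + 1))) * a ^ k * b ^ (n - k))"
  proof -
    obtain m where m: "n = Suc m" using n by (cases n) auto
    show ?thesis unfolding m sum.atMost_Suc lessThan_Suc_atMost[symmetric] by (simp add: binomial_eq_0)
  qed
  also have "\<dots> = (1 / of_nat n) * (\<Sum>k<n. of_nat (n choose k) * of_nat (n choose (k + 1)) * b ^ (n - k) * a ^ k)"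
    unfolding sum_distrib_left by (rule sum.cong[OF refl]) (simp only: mult_ac)
  finally show "poly (gpoly a b n) a = (1 / of_nat n) * (\<Sum>k<n. of_nat (n choose k) * of_nat (n choose (k + 1)) * b ^ (n - k) * a ^ k)" .
qed

end
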